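(* Consider the power network system described in the context and an equilibrium $(\eta^*,\omega^*,p^{M,*},p^{c,*},\psi^* )$ of it for some constant switching vector $\sigma^*\in\{0,1\}^{|\tilde{\mathcal L}|}$; write $p^{c,*}$ also for the common value of the (equal) entries of the equilibrium power command vector. Suppose $\kappa_j=q_j^{-1}$ for all $j\in\mathcal N$, and suppose there exist $\theta\ge 0$ and $\zeta\in\mathbb R$ such that $p^{c,*}-\theta/K\le\zeta\le p^{c,*}$ and, for every $(l,j)\in\tilde{\mathcal L}$, $\sigma^*_{l,j}\in\{0\}$ if $\zeta>c_{l,j}/\overline d_{l,j}$; $\sigma^*_{l,j}\in\{0,\rho_{l,j}\}$ if $\zeta=c_{l,j}/\overline d_{l,j}$; $\sigma^*_{l,j}\in\{\rho_{l,j}\}$ if $|\zeta|<c_{l,j}/\overline d_{l,j}$; $\sigma^*_{l,j}\in\{\rho_{l,j},1\}$ if $\zeta=-c_{l,j}/\overline d_{l,j}$; $\sigma^*_{l,j}\in\{1\}$ if $\zeta<-c_{l,j}/\overline d_{l,j}$. Then $(p^{M,*},\sigma^* )$ is $\epsilon$-optimal for the H-OSC problem with $\epsilon=3\theta^2/(2K)$.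
   Context: Let $(\mathcal N,\mathcal E)$ be a connected directed graph (the power network) with bus set $\mathcal N=\{1,\dots,|\mathcal N|\}$ and line set $\mathcal E$, oriented arbitrarily so that $(i,j)\in\mathcal E$ implies $(j,i)\notin\mathcal E$; $\mathcal N^p_j=\{k:(k,j)\in\mathcal E\}$, $\mathcal N^s_j=\{k:(j,k)\in\mathcal E\}$. Let $(\mathcal N,\tilde{\mathcal E})$ be a connected directed graph (communication network). For each $j\in\mathcal N$, $\mathcal L_j$ is a finite set of on-off loads and $\tilde{\mathcal L}=\{(l,j):l\in\mathcal L_j,j\in\mathcal N\}$; load $(l,j)$ has magnitude $\overline d_{l,j}>0$, switching state $\sigma_{l,j}\in\{0,1\}$, user-desired state $\rho_{l,j}\in\{0,1\}$, and a cost constant $c_{l,j}$. Constants $M_j,\gamma_j,\kappa_j,A_j,\tau_j,q_j>0$, $p^L_j\in\mathbb R$ ($j\in\mathcal N$), $B_{ij}>0$ ($(i,j)\in\mathcal E$), $\tau_{ij}>0$ ($(i,j)\in\tilde{\mathcal E}$); $K=\sum_{j\in\mathcal N}\kappa_j$. State $x=(\eta,\omega,p^M,p^c,\psi)$, dynamics: $\dot\eta_{ij}=\omega_i-\omega_j$, $(i,j)\in\mathcal E$; $M_j\dot\omega_j=p^M_j-p^L_j-A_j\omega_j-\sum_{l\in\mathcal L_j}\overline d_{l,j}\sigma_{l,j}-\sum_{k\in\mathcal N^s_j}B_{jk}\eta_{jk}+\sum_{i\in\mathcal N^p_j}B_{ij}\eta_{ij}$; $\gamma_j\dot p^M_j=-(p^M_j+\kappa_j\omega_j-\kappa_jp^c_j)$;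 $\tau_{ij}\dot\psi_{ij}=p^c_i-p^c_j$, $(i,j)\in\tilde{\mathcal E}$; $\tau_j\dot p^c_j=-p^M_j+p^L_j+\sum_{l\in\mathcal L_j}\overline d_{l,j}\sigma_{l,j}-\sum_{k:(j,k)\in\tilde{\mathcal E}}\psi_{jk}+\sum_{i:(i,j)\in\tilde{\mathcal E}}\psi_{ij}$. An equilibrium for fixed $\sigma$ is a state at which all derivatives vanish; at every equilibrium all entries of $p^{c,*}$ coincide. H-OSC problem: minimize over $p^M\in\mathbb R^{|\mathcal N|}$ and $\sigma\in\{0,1\}^{|\tilde{\mathcal L}|}$ the cost $C(p^M,\sigma)=\sum_{j\in\mathcal N}\big[\tfrac12q_j(p^M_j)^2+\sum_{l\in\mathcal L_j}C^d_{l,j}(\sigma_{l,j},\rho_{l,j})\big]$, where $C^d_{l,j}=c_{l,j}$ if $\sigma_{l,j}\ne\rho_{l,j}$ and $0$ otherwise, subject to $\sum_j p^M_j=\sum_j\big(p^L_j+\sum_{l\in\mathcal L_j}\overline d_{l,j}\sigma_{l,j}\big)$. A point $(p^M,\sigma)$ is $\epsilon$-optimal for H-OSC if $C(p^M,\sigma)\le(\text{minimum of H-OSC})+\epsilon$. *)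

theory Defs
  imports Complex_Main
begin

definition weakly_connected :: "'n set \<Rightarrow> ('n \<times> 'n) set \<Rightarrow> bool" where
  "weakly_connected N E \<longleftrightarrow> (\<forall>i\<in>N. \<forall>j\<in>N. (i, j) \<in> (E \<union> E\<inverse>)\<^sup>*)"

definition load_set :: "'n set \<Rightarrow> ('n \<Rightarrow> 'l set) \<Rightarrow> ('l \<times> 'n) set" where
  "load_set N L = {(l, j). j \<in> N \<and> l \<in> L j}"

text \<open>Equilibrium: every right-hand side of the dynamics (time derivative) vanishes.\<close>
definition is_equilibrium ::
  "'n set \<Rightarrow> ('n \<times> 'n) set \<Rightarrow> ('n \<times> 'n) set \<Rightarrow> ('n \<Rightarrow> 'l set) \<Rightarrow> ('l \<Rightarrow> 'n \<Rightarrow> real) \<Rightarrow>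
   ('n \<Rightarrow> real) \<Rightarrow> ('n \<Rightarrow> real) \<Rightarrow> ('n \<Rightarrow> real) \<Rightarrow> ('n \<Rightarrow> real) \<Rightarrow> ('n \<Rightarrow> real) \<Rightarrow> ('n \<Rightarrow> real) \<Rightarrow>
   ('n \<times> 'n \<Rightarrow> real) \<Rightarrow> ('n \<times> 'n \<Rightarrow> real) \<Rightarrow>
   ('l \<Rightarrow> 'n \<Rightarrow> real) \<Rightarrow>
   ('n \<times> 'n \<Rightarrow> real) \<Rightarrow> ('n \<Rightarrow> real) \<Rightarrow> ('n \<Rightarrow> real) \<Rightarrow> ('n \<Rightarrow> real) \<Rightarrow> ('n \<times> 'n \<Rightarrow> real) \<Rightarrow> bool" where
  "is_equilibrium N E Et L dbar M gamma kappa A tau pL B tauE sigma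
      eta omega pM pc psi \<longleftrightarrow>
     (\<forall>(i, j)\<in>E. omega i - omega j = 0) \<and>
     (\<forall>j\<in>N. (pM j - pL j - A j * omega j - (\<Sum>l\<in>L j. dbar l j * sigma l j)
              - (\<Sum>k\<in>{k. (j, k) \<in> E}. B (j, k) * eta (j, k))
              + (\<Sum>i\<in>{i. (i, j) \<in> E}. B (i, j) * eta (i, j))) / M j = 0) \<and>
     (\<forall>j\<in>N. (- (pM j + kappa j * omega j - kappa j * pc j)) / gamma j = 0) \<and>
     (\<forall>(i, j)\<in>Et. (pc i - pc j) / tauE (i, j) = 0) \<and>
     (\<forall>j\<in>N. (- pM j + pL j + (\<Sum>l\<in>L j. dbar l j * sigma l j)
              - (\<Sum>k\<in>{k. (j, k) \<in> Et}. psi (j, k))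
              + (\<Sum>i\<in>{i. (i, j) \<in> Et}. psi (i, j))) / tau j = 0)"

definition hosc_cost ::
  "'n set \<Rightarrow> ('n \<Rightarrow> 'l set) \<Rightarrow> ('n \<Rightarrow> real) \<Rightarrow> ('l \<Rightarrow> 'n \<Rightarrow> real) \<Rightarrow> ('l \<Rightarrow> 'n \<Rightarrow> real) \<Rightarrow>
   ('n \<Rightarrow> real) \<Rightarrow> ('l \<Rightarrow> 'n \<Rightarrow> real) \<Rightarrow> real" where
  "hosc_cost N L q c rho pM sigma =
     (\<Sum>j\<in>N. q j * (pM j)\<^sup>2 / 2 + (\<Sum>l\<in>L j. (if sigma l j \<noteq> rho l j then c l j else 0)))"

definition hosc_feasible ::
  "'n set \<Rightarrow> ('n \<Rightarrow> 'l set) \<Rightarrow> ('l \<Rightarrow> 'n \<Rightarrow> real) \<Rightarrow> ('n \<Rightarrow> real) \<Rightarrow>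
   ('n \<Rightarrow> real) \<Rightarrow> ('l \<Rightarrow> 'n \<Rightarrow> real) \<Rightarrow> bool" where
  "hosc_feasible N L dbar pL pM sigma \<longleftrightarrow>
     (\<forall>(l, j)\<in>load_set N L. sigma l j \<in> {0, 1}) \<and>
     (\<Sum>j\<in>N. pM j) = (\<Sum>j\<in>N. pL j + (\<Sum>l\<in>L j. dbar l j * sigma l j))"

definition hosc_min ::
  "'n set \<Rightarrow> ('n \<Rightarrow> 'l set) \<Rightarrow> ('l \<Rightarrow> 'n \<Rightarrow> real) \<Rightarrow> ('n \<Rightarrow> real) \<Rightarrow> ('n \<Rightarrow> real) \<Rightarrow>
   ('l \<Rightarrow> 'n \<Rightarrow> real) \<Rightarrow> ('l \<Rightarrow> 'n \<Rightarrow> real) \<Rightarrow> real" where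
  "hosc_min N L dbar pL q c rho =
     Inf {hosc_cost N L q c rho pM sigma | pM sigma. hosc_feasible N L dbar pL pM sigma}"

definition eps_optimal ::
  "'n set \<Rightarrow> ('n \<Rightarrow> 'l set) \<Rightarrow> ('l \<Rightarrow> 'n \<Rightarrow> real) \<Rightarrow> ('n \<Rightarrow> real) \<Rightarrow> ('n \<Rightarrow> real) \<Rightarrow>
   ('l \<Rightarrow> 'n \<Rightarrow> real) \<Rightarrow> ('l \<Rightarrow> 'n \<Rightarrow> real) \<Rightarrow> real \<Rightarrow> ('n \<Rightarrow> real) \<Rightarrow> ('l \<Rightarrow> 'n \<Rightarrow> real) \<Rightarrow> bool" where
  "eps_optimal N L dbar pL q c rho \<epsilon> pM sigma \<longleftrightarrow>
     hosc_feasible N L dbar pL pM sigma \<and>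
     hosc_cost N L q c rho pM sigma \<le> hosc_min N L dbar pL q c rho + \<epsilon>"

end

theory Submission
  imports Defs
begin

lemma load_min:
  fixes d c z sg r s :: real
  assumes d: "d > 0" and sg: "sg \<in> {0,1}" and r: "r \<in> {0,1}" and s: "s \<in> {0,1}"
  and h: "(z > c / d \<longrightarrow> sg \<in> {0}) \<and>
           (z = c / d \<longrightarrow> sg \<in> {0, r}) \<and>
           (\<bar>z\<bar> < c / d \<longrightarrow> sg \<in> {r}) \<and>
           (z = - (c / d) \<longrightarrow> sg \<in> {r, 1}) \<and>
           (z < - (c / d) \<longrightarrow> sg \<in> {1})"
  shows "z * d * sg + (if sg \<noteq> r then c else 0) \<le> z * d * s + (if s \<noteq> r then c else 0)"
proof -
  define a where "a = c / d"
  have c: "c = a * d" using d by (simp add: a_def)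
  have h': "(z > a \<longrightarrow> sg \<in> {0}) \<and> (z = a \<longrightarrow> sg \<in> {0, r}) \<and> (\<bar>z\<bar> < a \<longrightarrow> sg \<in> {r}) \<and>
    (z = - a \<longrightarrow> sg \<in> {r, 1}) \<and> (z < - a \<longrightarrow> sg \<in> {1})" using h by (simp add: a_def)
  have m1: "z * d \<le> a * d" if "z \<le> a" using d that by (simp add: mult_right_mono)
  have m2: "a * d \<le> z * d" if "a \<le> z" using d that by (simp add: mult_right_mono)
  have m3: "z * d \<le> - a * d" if "z \<le> -a" using mult_right_mono[OF that, of d] d by simp
  have m4: "- a * d \<le> z * d" if "-a \<le> z" using mult_right_mono[OF that, of d] d by simp
  show ?thesis unfolding c using sg r s h' m1 m2 m3 m4
    by (auto split: if_splits simp: abs_if mult.commute)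
qed
lemma edge_out:
  fixes f :: "'n \<times> 'n \<Rightarrow> real"
  assumes "finite N" "E \<subseteq> N \<times> N"
  shows "(\<Sum>j\<in>N. \<Sum>k\<in>{k. (j, k) \<in> E}. f (j, k)) = (\<Sum>e\<in>E. f e)"
proof -
  have fin: "\<forall>j\<in>N. finite {k. (j, k) \<in> E}"
  proof
    fix j assume "j \<in> N"
    have "{k. (j, k) \<in> E} \<subseteq> N" using assms(2) by auto
    then show "finite {k. (j, k) \<in> E}" using assms(1) finite_subset by blast
  qed
  have "(\<Sum>j\<in>N. \<Sum>k\<in>{k. (j, k) \<in> E}. f (j, k)) = (\<Sum>(j,k)\<in>Sigma N (\<lambda>j. {k. (j, k) \<in> E}). f (j, k))"
    using sum.Sigma[OF assms(1) fin, of "\<lambda>a b. f (a, b)"] by simp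
  also have "Sigma N (\<lambda>j. {k. (j, k) \<in> E}) = E" using assms(2) by auto
  finally show ?thesis by (simp add: case_prod_unfold)
qed

lemma edge_in:
  fixes f :: "'n \<times> 'n \<Rightarrow> real"
  assumes "finite N" "E \<subseteq> N \<times> N"
  shows "(\<Sum>j\<in>N. \<Sum>i\<in>{i. (i, j) \<in> E}. f (i, j)) = (\<Sum>e\<in>E. f e)"
proof -
  have fin: "\<forall>j\<in>N. finite {i. (i, j) \<in> E}"
  proof
    fix j assume "j \<in> N"
    have "{i. (i, j) \<in> E} \<subseteq> N" using assms(2) by auto
    then show "finite {i. (i, j) \<in> E}" using assms(1) finite_subset by blast
  qed
  have "(\<Sum>j\<in>N. \<Sum>i\<in>{i. (i, j) \<in> E}. f (i, j)) = (\<Sum>(j,i)\<in>Sigma N (\<lambda>j. {i. (i, j) \<in> E}). f (i, j))"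
    using sum.Sigma[OF assms(1) fin, of "\<lambda>a b. f (b, a)"] by (simp add: case_prod_unfold)
  also have "Sigma N (\<lambda>j. {i. (i, j) \<in> E}) = prod.swap ` E" using assms(2) by force
  also have "(\<Sum>(j,i)\<in>prod.swap ` E. f (i, j)) = (\<Sum>e\<in>E. f e)"
    by (subst sum.reindex) (auto simp: case_prod_unfold)
  finally show ?thesis .
qed
lemma regroup:
  fixes a b k e :: "'n \<Rightarrow> real" and z :: real
  shows "(\<Sum>j\<in>N. z * a j - z\<^sup>2 * k j / 2 + (z * b j + e j)) = z * (\<Sum>j\<in>N. a j + b j) - z\<^sup>2 * (\<Sum>j\<in>N. k j) / 2 + (\<Sum>j\<in>N. e j)"
proof -
  have "(\<Sum>j\<in>N. z * a j - z\<^sup>2 * k j / 2 + (z * b j + e j)) = (\<Sum>j\<in>N. z * (a j + b j) - (z\<^sup>2 / 2) * k j + e j)"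
    by (rule sum.cong) (auto simp: algebra_simps)
  also have "\<dots> = z * (\<Sum>j\<in>N. a j + b j) - (z\<^sup>2 / 2) * (\<Sum>j\<in>N. k j) + (\<Sum>j\<in>N. e j)"
    by (simp only: sum.distrib sum_subtractf sum_distrib_left[symmetric])
  finally show ?thesis by simp
qed
lemma regroup2:
  fixes p k e :: "'n \<Rightarrow> real" and z :: real
  shows "z * (\<Sum>j\<in>N. p j) - z\<^sup>2 * (\<Sum>j\<in>N. k j) / 2 + (\<Sum>j\<in>N. e j) = (\<Sum>j\<in>N. z * p j - z\<^sup>2 * k j / 2 + e j)"
proof -
  have "(\<Sum>j\<in>N. z * p j - z\<^sup>2 * k j / 2 + e j) = (\<Sum>j\<in>N. z * p j - (z\<^sup>2 / 2) * k j + e j)"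
    by (rule sum.cong) (auto simp: algebra_simps)
  also have "\<dots> = z * (\<Sum>j\<in>N. p j) - (z\<^sup>2 / 2) * (\<Sum>j\<in>N. k j) + (\<Sum>j\<in>N. e j)"
    by (simp only: sum.distrib sum_subtractf sum_distrib_left[symmetric])
  finally show ?thesis by simp
qed
theorem proposition1:
  fixes N :: "'n set" and E Et :: "('n \<times> 'n) set" and L :: "'n \<Rightarrow> 'l set"
    and dbar c rho sigma :: "'l \<Rightarrow> 'n \<Rightarrow> real"
    and M gamma kappa A tau q pL :: "'n \<Rightarrow> real"
    and B tauE :: "'n \<times> 'n \<Rightarrow> real"
    and eta psi :: "'n \<times> 'n \<Rightarrow> real" and omega pM pc :: "'n \<Rightarrow> real"
    and pcs theta zeta :: real
  assumes "finite N" and "N \<noteq> {}"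
    and "E \<subseteq> N \<times> N" and "\<And>i j. (i, j) \<in> E \<Longrightarrow> (j, i) \<notin> E"
    and "weakly_connected N E"
    and "Et \<subseteq> N \<times> N" and "weakly_connected N Et"
    and "\<And>j. j \<in> N \<Longrightarrow> finite (L j)"
    and "\<And>l j. (l, j) \<in> load_set N L \<Longrightarrow> dbar l j > 0"
    and "\<And>l j. (l, j) \<in> load_set N L \<Longrightarrow> rho l j \<in> {0, 1}"
    and "\<And>l j. (l, j) \<in> load_set N L \<Longrightarrow> sigma l j \<in> {0, 1}"
    and "\<And>j. j \<in> N \<Longrightarrow> M j > 0 \<and> gamma j > 0 \<and> kappa j > 0 \<and> A j > 0 \<and> tau j > 0 \<and> q j > 0"
    and "\<And>e. e \<in> E \<Longrightarrow> B e > 0"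
    and "\<And>e. e \<in> Et \<Longrightarrow> tauE e > 0"
    and "is_equilibrium N E Et L dbar M gamma kappa A tau pL B tauE sigma eta omega pM pc psi"
    and "\<And>j. j \<in> N \<Longrightarrow> pc j = pcs"
    and "\<And>j. j \<in> N \<Longrightarrow> kappa j = 1 / q j"
    and "theta \<ge> 0"
    and "pcs - theta / (\<Sum>j\<in>N. kappa j) \<le> zeta" and "zeta \<le> pcs"
    and "\<And>l j. (l, j) \<in> load_set N L \<Longrightarrow>
           (zeta > c l j / dbar l j \<longrightarrow> sigma l j \<in> {0}) \<and>
           (zeta = c l j / dbar l j \<longrightarrow> sigma l j \<in> {0, rho l j}) \<and>
           (\<bar>zeta\<bar> < c l j / dbar l j \<longrightarrow> sigma l j \<in> {rho l j}) \<and>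
           (zeta = - (c l j / dbar l j) \<longrightarrow> sigma l j \<in> {rho l j, 1}) \<and>
           (zeta < - (c l j / dbar l j) \<longrightarrow> sigma l j \<in> {1})"
  shows "eps_optimal N L dbar pL q c rho (3 * theta\<^sup>2 / (2 * (\<Sum>j\<in>N. kappa j))) pM sigma"
proof -
  note eq = assms(15)[unfolded is_equilibrium_def]
  define K where "K = (\<Sum>j\<in>N. kappa j)"
  have Kpos: "K > 0" unfolding K_def using assms(1,2,12) by (intro sum_pos) auto
  obtain j0 where j0: "j0 \<in> N" using assms(2) by blast
  have om: "omega j = omega j0" if "j \<in> N" for j
  proof -
    have "(j0, j) \<in> (E \<union> E\<inverse>)\<^sup>*" using assms(5) j0 that unfolding weakly_connected_def by blast
    then show ?thesis
    proof (induction rule: rtrancl_induct)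
      case base show ?case by simp
    next
      case (step y z)
      have "omega y = omega z" using step.hyps(2) eq by auto
      then show ?case using step.IH by simp
    qed
  qed
  define D where "D = (\<lambda>s j. \<Sum>l\<in>L j. dbar l j * s l j)"
  define Cd where "Cd = (\<lambda>(s::'l \<Rightarrow> 'n \<Rightarrow> real) j. \<Sum>l\<in>L j. (if s l j \<noteq> rho l j then c l j else 0))"
  define outE where "outE = (\<lambda>j. \<Sum>k\<in>{k. (j, k) \<in> E}. B (j, k) * eta (j, k))"
  define inE where "inE = (\<lambda>j. \<Sum>i\<in>{i. (i, j) \<in> E}. B (i, j) * eta (i, j))"
  define outT where "outT = (\<lambda>j. \<Sum>k\<in>{k. (j, k) \<in> Et}. psi (j, k))"
  define inT where "inT = (\<lambda>j. \<Sum>i\<in>{i. (i, j) \<in> Et}. psi (i, j))"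
  have e2: "pM j - pL j - A j * omega j0 - D sigma j - outE j + inE j = 0" if "j \<in> N" for j
    using eq that assms(12)[OF that] om[OF that] unfolding D_def outE_def inE_def by auto
  have e3: "pM j = kappa j * (pcs - omega j0)" if "j \<in> N" for j
    using eq that assms(12)[OF that] om[OF that] assms(16)[OF that] by (auto simp: algebra_simps)
  have e5: "- pM j + pL j + D sigma j - outT j + inT j = 0" if "j \<in> N" for j
    using eq that assms(12)[OF that] unfolding D_def outT_def inT_def by auto
  have oi: "(\<Sum>j\<in>N. outE j) = (\<Sum>j\<in>N. inE j)"
    unfolding outE_def inE_def
    using edge_out[OF assms(1,3), of "\<lambda>e. B e * eta e"] edge_in[OF assms(1,3), of "\<lambda>e. B e * eta e"]
    by simp
  have oiT: "(\<Sum>j\<in>N. outT j) = (\<Sum>j\<in>N. inT j)"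
    unfolding outT_def inT_def
    using edge_out[OF assms(1,6), of psi] edge_in[OF assms(1,6), of psi]
    by simp
  have "(\<Sum>j\<in>N. - pM j + pL j + D sigma j - outT j + inT j) = 0"
    using e5 by simp
  then have bal: "(\<Sum>j\<in>N. pM j) = (\<Sum>j\<in>N. pL j + D sigma j)"
    using oiT by (simp add: sum.distrib sum_subtractf sum_negf)
  have "(\<Sum>j\<in>N. pM j - pL j - A j * omega j0 - D sigma j - outE j + inE j) = 0"
    using e2 by simp
  then have "(\<Sum>j\<in>N. pM j) - (\<Sum>j\<in>N. pL j + D sigma j) - omega j0 * (\<Sum>j\<in>N. A j) = 0"
    using oi by (simp add: sum.distrib sum_subtractf sum_distrib_left algebra_simps)
  then have "omega j0 * (\<Sum>j\<in>N. A j) = 0" using bal by simp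
  moreover have "(\<Sum>j\<in>N. A j) > 0" using assms(1,2,12) by (intro sum_pos) auto
  ultimately have w0: "omega j0 = 0" by simp
  have pMj: "pM j = kappa j * pcs" if "j \<in> N" for j using e3[OF that] w0 by simp
  have feas: "hosc_feasible N L dbar pL pM sigma"
    unfolding hosc_feasible_def using assms(11) bal unfolding D_def by auto
  have ourcost: "hosc_cost N L q c rho pM sigma = pcs\<^sup>2 * K / 2 + (\<Sum>j\<in>N. Cd sigma j)"
  proof -
    have "hosc_cost N L q c rho pM sigma = (\<Sum>j\<in>N. kappa j * pcs\<^sup>2 / 2 + Cd sigma j)"
      unfolding hosc_cost_def Cd_def
    proof (rule sum.cong)
      fix j assume j: "j \<in> N"
      have "q j * (pM j)\<^sup>2 / 2 = kappa j * pcs\<^sup>2 / 2"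
      proof -
        have qk: "q j * kappa j = 1" using assms(17)[OF j] assms(12)[OF j] by simp
        have "q j * (pM j)\<^sup>2 = (q j * kappa j) * kappa j * pcs\<^sup>2"
          using pMj[OF j] by (simp add: power2_eq_square algebra_simps)
        then show ?thesis using qk by simp
      qed
      then show "q j * (pM j)\<^sup>2 / 2 + (\<Sum>l\<in>L j. if sigma l j \<noteq> rho l j then c l j else 0) =
        kappa j * pcs\<^sup>2 / 2 + (\<Sum>l\<in>L j. if sigma l j \<noteq> rho l j then c l j else 0)" by simp
    qed simp
    also have "\<dots> = pcs\<^sup>2 * K / 2 + (\<Sum>j\<in>N. Cd sigma j)"
      unfolding K_def by (simp add: sum.distrib sum_divide_distrib[symmetric] sum_distrib_right[symmetric] mult.commute)
    finally show ?thesis .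
  qed
  have DK: "(\<Sum>j\<in>N. pL j + D sigma j) = pcs * K"
  proof -
    have "(\<Sum>j\<in>N. pM j) = (\<Sum>j\<in>N. pcs * kappa j)" using pMj by (simp add: mult.commute)
    then show ?thesis using bal unfolding K_def by (simp add: sum_distrib_left)
  qed
  have lower: "zeta * pcs * K - zeta\<^sup>2 * K / 2 + (\<Sum>j\<in>N. Cd sigma j) \<le> hosc_cost N L q c rho p s"
    if fs: "hosc_feasible N L dbar pL p s" for p s
  proof -
    have sbin: "\<And>l j. (l, j) \<in> load_set N L \<Longrightarrow> s l j \<in> {0, 1}" using fs unfolding hosc_feasible_def by auto
    have sbal: "(\<Sum>j\<in>N. p j) = (\<Sum>j\<in>N. pL j + D s j)" using fs unfolding hosc_feasible_def D_def by auto
    have jin: "zeta * p j - zeta\<^sup>2 * kappa j / 2 \<le> q j * (p j)\<^sup>2 / 2" if j: "j \<in> N" for j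
    proof -
      have qp: "q j > 0" using assms(12)[OF j] by simp
      have "0 \<le> (q j * p j - zeta)\<^sup>2 / (2 * q j)" using qp by simp
      also have "(q j * p j - zeta)\<^sup>2 / (2 * q j) = q j * (p j)\<^sup>2 / 2 - (zeta * p j - zeta\<^sup>2 * kappa j / 2)"
        using qp assms(17)[OF j] by (simp add: power2_eq_square field_simps)
      finally show ?thesis by simp
    qed
    have lj: "zeta * D sigma j + Cd sigma j \<le> zeta * D s j + Cd s j" if j: "j \<in> N" for j
    proof -
      have "zeta * D sigma j + Cd sigma j = (\<Sum>l\<in>L j. zeta * dbar l j * sigma l j + (if sigma l j \<noteq> rho l j then c l j else 0))"
        unfolding D_def Cd_def by (simp add: sum.distrib sum_distrib_left mult.assoc)
      also have "\<dots> \<le> (\<Sum>l\<in>L j. zeta * dbar l j * s l j + (if s l j \<noteq> rho l j then c l j else 0))"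
      proof (rule sum_mono)
        fix l assume l: "l \<in> L j"
        have lj: "(l, j) \<in> load_set N L" using l j unfolding load_set_def by auto
        show "zeta * dbar l j * sigma l j + (if sigma l j \<noteq> rho l j then c l j else 0)
           \<le> zeta * dbar l j * s l j + (if s l j \<noteq> rho l j then c l j else 0)"
          by (rule load_min[OF assms(9)[OF lj] assms(11)[OF lj] assms(10)[OF lj] sbin[OF lj] assms(21)[OF lj]])
      qed
      also have "\<dots> = zeta * D s j + Cd s j"
        unfolding D_def Cd_def by (simp add: sum.distrib sum_distrib_left mult.assoc)
      finally show ?thesis .
    qed
    have "zeta * pcs * K - zeta\<^sup>2 * K / 2 + (\<Sum>j\<in>N. Cd sigma j)
        = (\<Sum>j\<in>N. zeta * pL j - zeta\<^sup>2 * kappa j / 2 + (zeta * D sigma j + Cd sigma j))"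
      unfolding regroup DK K_def by (simp add: mult.assoc)
    also have "\<dots> \<le> (\<Sum>j\<in>N. zeta * pL j - zeta\<^sup>2 * kappa j / 2 + (zeta * D s j + Cd s j))"
      using lj by (intro sum_mono) auto
    also have "\<dots> = zeta * (\<Sum>j\<in>N. p j) - zeta\<^sup>2 * K / 2 + (\<Sum>j\<in>N. Cd s j)"
      unfolding regroup sbal[symmetric] K_def by simp
    also have "\<dots> = (\<Sum>j\<in>N. zeta * p j - zeta\<^sup>2 * kappa j / 2 + Cd s j)"
      unfolding K_def by (rule regroup2)
    also have "\<dots> \<le> (\<Sum>j\<in>N. q j * (p j)\<^sup>2 / 2 + Cd s j)"
      using jin by (intro sum_mono) auto
    also have "\<dots> = hosc_cost N L q c rho p s" unfolding hosc_cost_def Cd_def by simp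
    finally show ?thesis .
  qed
  have gap: "K * (pcs - zeta)\<^sup>2 / 2 \<le> 3 * theta\<^sup>2 / (2 * K)"
  proof -
    have a: "0 \<le> pcs - zeta" using assms(20) by simp
    have b: "pcs - zeta \<le> theta / K" using assms(19) unfolding K_def by simp
    have "(pcs - zeta)\<^sup>2 \<le> (theta / K)\<^sup>2" using a b by (intro power_mono) auto
    then have "K * (pcs - zeta)\<^sup>2 / 2 \<le> K * (theta / K)\<^sup>2 / 2" using Kpos by simp
    also have "\<dots> = theta\<^sup>2 / (2 * K)" using Kpos by (simp add: power2_eq_square field_simps)
    also have "\<dots> \<le> 3 * theta\<^sup>2 / (2 * K)" using Kpos by (simp add: divide_right_mono)
    finally show ?thesis .
  qed
  have key: "hosc_cost N L q c rho pM sigma - 3 * theta\<^sup>2 / (2 * K) \<le> hosc_cost N L q c rho p s"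
    if "hosc_feasible N L dbar pL p s" for p s
  proof -
    have "hosc_cost N L q c rho pM sigma - K * (pcs - zeta)\<^sup>2 / 2
        = zeta * pcs * K - zeta\<^sup>2 * K / 2 + (\<Sum>j\<in>N. Cd sigma j)"
      unfolding ourcost by (simp add: power2_eq_square field_simps)
    then show ?thesis using lower[OF that] gap by linarith
  qed
  have "hosc_cost N L q c rho pM sigma - 3 * theta\<^sup>2 / (2 * K) \<le> hosc_min N L dbar pL q c rho"
    unfolding hosc_min_def
  proof (rule cInf_greatest)
    show "{hosc_cost N L q c rho pM sigma | pM sigma. hosc_feasible N L dbar pL pM sigma} \<noteq> {}"
      using feas by blast
  next
    fix x assume "x \<in> {hosc_cost N L q c rho pM sigma | pM sigma. hosc_feasible N L dbar pL pM sigma}"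
    then show "hosc_cost N L q c rho pM sigma - 3 * theta\<^sup>2 / (2 * K) \<le> x" using key by blast
  qed
  then show ?thesis unfolding eps_optimal_def K_def[symmetric] using feas by simp
qed

end
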